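(* Consider the censored delayed-feedback bandit model with threshold $m\ge1$ (see context) in which the sequence of pulled arms $(A_s)_{s\ge1}$ is fixed beforehand (deterministic, independent of all realizations). Let $k\in\{1,\dots,K\}$ and $t>0$ with $\tilde N_k(t)>0$. Then for any $\delta>0$, \[ \mathbb{P}\Big(\{\hat\theta_k(t)<\theta_k\}\cap\{\tilde N_k(t)\,d_{\mathrm{Pois}}(\hat\theta_k(t),\theta_k)>\delta\}\Big)<e^{-\delta}. \]
   Context: Censored delayed-feedback bandit model: $K$ arms with conversion rates $\theta_1,\dots,\theta_K\in[0,1]$; a delay distribution on $\mathbb{N}$ with CDF $\tau_d=\mathbb{P}(D\le d)$; threshold $m$. Pulling arm $A_s$ at round $s$ triggers independent $C_s\sim\mathrm{Bernoulli}(\theta_{A_s})$ and $D_s\sim\tau$ (independent across rounds); a conversion of the pull at round $s$ is observed at time $s+D_s$ only if $D_s\le m$. Define $\tilde N_k(t)=\tau_m\sum_{s=1}^{t-m}\mathbf{1}\{A_s=k\}+\sum_{s=t-m+1}^{t-1}\mathbf{1}\{A_s=k\}\tau_{t-s}$, $S_k(t)=\sum_{s=1}^{t-1}\mathbf{1}\{A_s=k\}C_s\mathbf{1}\{D_s\le\min(t-s,m)\}$ (the number of conversions of previous pulls of $k$ observed by time $t$), and $\hat\theta_k(t)=S_k(t)/\tilde N_k(t)$. $d_{\mathrm{Pois}}(p,q)=p\log(p/q)+q-p$ is the Poisson Kullback–Leibler divergence. *)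

theory Defs
  imports "HOL-Probability.Probability"
begin

text \<open>Rounds are indexed by s = 1, 2, ... An outcome records, for each round s, the pair
  (C_s, D_s) of conversion indicator and delay. For the quantities at time t only the rounds
  s in {1..<t} matter, so the probability space is the joint law of (C_s, D_s) for these
  rounds: a product of independent pairs, C_s ~ Bernoulli(theta (A s)), D_s ~ delay,
  C_s independent of D_s.\<close>

definition cdf_tau :: "nat pmf \<Rightarrow> nat \<Rightarrow> real" where
  "cdf_tau delay d = measure_pmf.prob delay {..d}"

definition bandit_pmf ::
  "(nat \<Rightarrow> nat) \<Rightarrow> (nat \<Rightarrow> real) \<Rightarrow> nat pmf \<Rightarrow> nat \<Rightarrow> (nat \<Rightarrow> bool \<times> nat) pmf" where
  "bandit_pmf A \<theta> delay t =
     Pi_pmf {1..<t} (False, 0) (\<lambda>s. pair_pmf (bernoulli_pmf (\<theta> (A s))) delay)"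

definition Ntilde :: "(nat \<Rightarrow> nat) \<Rightarrow> nat pmf \<Rightarrow> nat \<Rightarrow> nat \<Rightarrow> nat \<Rightarrow> real" where
  "Ntilde A delay m k t =
     cdf_tau delay m * real (card {s\<in>{1..<t}. s + m \<le> t \<and> A s = k})
     + (\<Sum>s\<in>{s\<in>{1..<t}. t < s + m}. (if A s = k then cdf_tau delay (t - s) else 0))"

definition Sk :: "(nat \<Rightarrow> nat) \<Rightarrow> nat \<Rightarrow> nat \<Rightarrow> nat \<Rightarrow> (nat \<Rightarrow> bool \<times> nat) \<Rightarrow> real" where
  "Sk A m k t \<omega> =
     real (card {s\<in>{1..<t}. A s = k \<and> fst (\<omega> s) \<and> snd (\<omega> s) \<le> min (t - s) m})"

definition theta_hat ::
  "(nat \<Rightarrow> nat) \<Rightarrow> nat pmf \<Rightarrow> nat \<Rightarrow> nat \<Rightarrow> nat \<Rightarrow> (nat \<Rightarrow> bool \<times> nat) \<Rightarrow> real" where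
  "theta_hat A delay m k t \<omega> = Sk A m k t \<omega> / Ntilde A delay m k t"

text \<open>Poisson KL divergence (with 0 log 0 = 0, automatic since 0 * _ = 0).\<close>
definition d_pois :: "real \<Rightarrow> real \<Rightarrow> real" where
  "d_pois p q = p * ln (p / q) + q - p"

end

theory Submission imports Defs begin

lemma pow_card_prod:
  fixes r :: real
  assumes "finite I"
  shows "r ^ card {s\<in>I. P s} = (\<Prod>s\<in>I. if P s then r else 1)"
  using assms by (simp add: prod.If_cases Int_def conj_commute)

lemma exp_if_pmf:
  fixes r :: real
  shows "measure_pmf.expectation p (\<lambda>v. if v \<in> B then r else 1) = 1 - (1 - r) * measure_pmf.prob p B"
proof -
  have "(\<lambda>v. if v \<in> B then r else 1) = (\<lambda>v. 1 - (1 - r) * indicator B v)"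
    by (auto simp: indicator_def fun_eq_iff)
  moreover have "measure_pmf.expectation p (\<lambda>v. 1 - (1 - r) * indicator B v)
     = 1 - (1 - r) * measure_pmf.prob p B"
  proof -
    have i: "integrable (measure_pmf p) (indicator B :: _ \<Rightarrow> real)"
      by (rule measure_pmf.integrable_const_bound[where B=1]) (auto simp: indicator_def)
    show ?thesis
      by (subst Bochner_Integration.integral_diff) (use i in auto)
  qed
  ultimately show ?thesis by simp
qed

lemma factor_exp:
  fixes r p :: real
  assumes "0 \<le> p" "p \<le> 1"
  shows "measure_pmf.expectation (pair_pmf (bernoulli_pmf p) delay)
     (\<lambda>v. if b \<and> fst v \<and> snd v \<le> M then r else 1) = (if b then 1 - (1 - r) * (p * cdf_tau delay M) else 1)"
proof (cases b)
  case True
  have "(\<lambda>v. if b \<and> fst v \<and> snd v \<le> M then r else 1) = (\<lambda>v. if v \<in> {True} \<times> {..M} then r else 1)"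
    using True by (auto simp: fun_eq_iff)
  moreover have "measure_pmf.prob (pair_pmf (bernoulli_pmf p) delay) ({True} \<times> {..M}) = p * cdf_tau delay M"
    by (subst measure_pmf_prob_product) (auto simp: cdf_tau_def measure_pmf_single assms)
  ultimately show ?thesis using True by (simp add: exp_if_pmf)
qed simp

lemma Ntilde_sum:
  "Ntilde A delay m k t = (\<Sum>s\<in>{1..<t}. if A s = k then cdf_tau delay (min (t - s) m) else 0)"
proof -
  let ?f = "\<lambda>s. if A s = k then cdf_tau delay (min (t - s) m) else 0"
  have split: "{1..<t} = {s\<in>{1..<t}. s + m \<le> t} \<union> {s\<in>{1..<t}. t < s + m}" by auto
  have "(\<Sum>s\<in>{1..<t}. ?f s) = (\<Sum>s\<in>{s\<in>{1..<t}. s + m \<le> t}. ?f s) + (\<Sum>s\<in>{s\<in>{1..<t}. t < s + m}. ?f s)"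
    by (subst split, rule sum.union_disjoint) auto
  moreover have "(\<Sum>s\<in>{s\<in>{1..<t}. s + m \<le> t}. ?f s) = (\<Sum>s\<in>{s\<in>{1..<t}. s + m \<le> t}. if A s = k then cdf_tau delay m else 0)"
    by (rule sum.cong) (auto simp: min_def intro: arg_cong[where f="cdf_tau delay"])
  moreover have "(\<Sum>s\<in>{s\<in>{1..<t}. s + m \<le> t}. if A s = k then cdf_tau delay m else 0)
      = cdf_tau delay m * real (card {s\<in>{1..<t}. s + m \<le> t \<and> A s = k})"
  proof -
    have e: "{s\<in>{s\<in>{1..<t}. s + m \<le> t}. A s = k} = {s\<in>{1..<t}. s + m \<le> t \<and> A s = k}" by auto
    have "(\<Sum>s\<in>{s\<in>{1..<t}. s + m \<le> t}. if A s = k then cdf_tau delay m else 0)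
       = (\<Sum>s\<in>{s\<in>{s\<in>{1..<t}. s + m \<le> t}. A s = k}. cdf_tau delay m)"
      by (rule sum.inter_filter[symmetric]) auto
    then show ?thesis unfolding e by simp
  qed
  moreover have "(\<Sum>s\<in>{s\<in>{1..<t}. t < s + m}. ?f s) = (\<Sum>s\<in>{s\<in>{1..<t}. t < s + m}. (if A s = k then cdf_tau delay (t - s) else 0))"
    by (rule sum.cong) (auto simp: min_def)
  ultimately show ?thesis unfolding Ntilde_def by simp
qed

lemma cdf_tau_bounds: "0 \<le> cdf_tau delay d" "cdf_tau delay d \<le> 1"
  by (auto simp: cdf_tau_def)

lemma mgf_bound:
  fixes r :: real
  assumes r: "0 \<le> r" "r \<le> 1"
    and th: "\<And>s. s \<in> {1..<t} \<Longrightarrow> 0 \<le> \<theta> (A s) \<and> \<theta> (A s) \<le> 1"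
  shows "measure_pmf.expectation (bandit_pmf A \<theta> delay t)
      (\<lambda>\<omega>. r ^ card {s\<in>{1..<t}. A s = k \<and> fst (\<omega> s) \<and> snd (\<omega> s) \<le> min (t - s) m})
    \<le> exp (- ((1 - r) * \<theta> k * Ntilde A delay m k t))"
proof -
  let ?I = "{1..<t::nat}"
  define f where "f s v = (if A s = k \<and> fst v \<and> snd v \<le> min (t - s) m then r else (1::real))" for s v
  have "(\<lambda>\<omega>. r ^ card {s\<in>?I. A s = k \<and> fst (\<omega> s) \<and> snd (\<omega> s) \<le> min (t - s) m})
      = (\<lambda>\<omega>. \<Prod>s\<in>?I. f s (\<omega> s))"
    by (rule ext, subst pow_card_prod) (auto simp: f_def)
  hence "measure_pmf.expectation (bandit_pmf A \<theta> delay t)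
      (\<lambda>\<omega>. r ^ card {s\<in>?I. A s = k \<and> fst (\<omega> s) \<and> snd (\<omega> s) \<le> min (t - s) m})
    = (\<Prod>s\<in>?I. measure_pmf.expectation (pair_pmf (bernoulli_pmf (\<theta> (A s))) delay) (f s))"
    unfolding bandit_pmf_def
    by (simp only:, intro expectation_prod_Pi_pmf)
       (auto simp: f_def r intro!: measure_pmf.integrable_const_bound[where B=1])
  also have "\<dots> = (\<Prod>s\<in>?I. if A s = k then 1 - (1 - r) * (\<theta> (A s) * cdf_tau delay (min (t - s) m)) else 1)"
    unfolding f_def by (intro prod.cong refl factor_exp) (use th in auto)
  also have "\<dots> \<le> (\<Prod>s\<in>?I. exp (- (if A s = k then (1 - r) * \<theta> k * cdf_tau delay (min (t - s) m) else 0)))"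
  proof (intro prod_mono conjI)
    fix s assume s: "s \<in> ?I"
    have c: "0 \<le> cdf_tau delay (min (t - s) m)" "cdf_tau delay (min (t - s) m) \<le> 1"
      by (rule cdf_tau_bounds)+
    have "(1 - r) * (\<theta> (A s) * cdf_tau delay (min (t - s) m)) \<le> 1 * (1 * 1)"
      using th[OF s] c r by (intro mult_mono) auto
    then show "0 \<le> (if A s = k then 1 - (1 - r) * (\<theta> (A s) * cdf_tau delay (min (t - s) m)) else 1)"
      by auto
    show "(if A s = k then 1 - (1 - r) * (\<theta> (A s) * cdf_tau delay (min (t - s) m)) else 1)
       \<le> exp (- (if A s = k then (1 - r) * \<theta> k * cdf_tau delay (min (t - s) m) else 0))"
      using exp_ge_add_one_self[of "- ((1 - r) * \<theta> k * cdf_tau delay (min (t - s) m))"]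
      by (auto simp: algebra_simps)
  qed
  also have "\<dots> = exp (- (\<Sum>s\<in>?I. (if A s = k then (1 - r) * \<theta> k * cdf_tau delay (min (t - s) m) else 0)))"
    by (simp only: sum_negf[symmetric] exp_sum[OF finite_atLeastLessThan])
  also have "(\<Sum>s\<in>?I. (if A s = k then (1 - r) * \<theta> k * cdf_tau delay (min (t - s) m) else 0))
     = (1 - r) * \<theta> k * Ntilde A delay m k t"
    unfolding Ntilde_sum sum_distrib_left by (rule sum.cong) auto
  finally show ?thesis .
qed

theorem lemma7:
  fixes K m k t :: nat and A :: "nat \<Rightarrow> nat" and \<theta> :: "nat \<Rightarrow> real"
    and delay :: "nat pmf" and \<delta> :: real
  assumes "m \<ge> 1"
    and "\<And>i. i \<in> {1..K} \<Longrightarrow> 0 \<le> \<theta> i \<and> \<theta> i \<le> 1"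
    and "\<And>s. s \<ge> 1 \<Longrightarrow> A s \<in> {1..K}"
    and "k \<in> {1..K}"
    and "t > 0"
    and "Ntilde A delay m k t > 0"
    and "\<delta> > 0"
  shows "measure_pmf.prob (bandit_pmf A \<theta> delay t)
           {\<omega>. theta_hat A delay m k t \<omega> < \<theta> k \<and>
                Ntilde A delay m k t * d_pois (theta_hat A delay m k t \<omega>) (\<theta> k) > \<delta>}
         < exp (- \<delta>)"
proof -
  let ?M = "bandit_pmf A \<theta> delay t"
  let ?N = "Ntilde A delay m k t"
  define Sn where "Sn \<omega> = card {s\<in>{1..<t}. A s = k \<and> fst (\<omega> s) \<and> snd (\<omega> s) \<le> min (t - s) m}"
    for \<omega> :: "nat \<Rightarrow> bool \<times> nat"
  define E where "E = {\<omega>. theta_hat A delay m k t \<omega> < \<theta> k \<and>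
                ?N * d_pois (theta_hat A delay m k t \<omega>) (\<theta> k) > \<delta>}"
  have N: "?N > 0" by fact
  have thk: "0 \<le> \<theta> k" "\<theta> k \<le> 1" using assms(2)[OF assms(4)] by auto
  have th: "\<And>s. s \<in> {1..<t} \<Longrightarrow> 0 \<le> \<theta> (A s) \<and> \<theta> (A s) \<le> 1"
    using assms(2,3) by auto
  have hat: "theta_hat A delay m k t \<omega> = real (Sn \<omega>) / ?N" for \<omega>
    unfolding theta_hat_def Sk_def Sn_def by simp
  show ?thesis
  proof (cases "E = {}")
    case True
    then have "measure_pmf.prob ?M E = 0" by simp
    then show ?thesis unfolding E_def by simp
  next
    case False
    have fin: "finite (Sn ` E)"
    proof (rule finite_subset)
      show "Sn ` E \<subseteq> {..t}"
      proof
        fix x assume "x \<in> Sn ` E"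
        then obtain \<omega> where "x = Sn \<omega>" by auto
        moreover have "Sn \<omega> \<le> card {1..<t}" unfolding Sn_def by (rule card_mono) auto
        ultimately show "x \<in> {..t}" by simp
      qed
    qed simp
    define n0 where "n0 = Max (Sn ` E)"
    have "n0 \<in> Sn ` E" unfolding n0_def using fin False by (intro Max_in) auto
    then obtain \<omega>0 where w0: "\<omega>0 \<in> E" "Sn \<omega>0 = n0" by auto
    have sub: "E \<subseteq> {\<omega>. Sn \<omega> \<le> n0}" unfolding n0_def using fin by auto
    have lt: "real n0 / ?N < \<theta> k" and dl: "?N * d_pois (real n0 / ?N) (\<theta> k) > \<delta>"
      using w0 unfolding E_def hat by auto
    have thpos: "\<theta> k > 0" using lt N
      by (smt (verit) divide_nonneg_pos of_nat_0_le_iff)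
    have n0lt: "real n0 < \<theta> k * ?N" using lt N by (simp add: field_simps)
    define r where "r = real n0 / (\<theta> k * ?N)"
    have r: "0 \<le> r" "r \<le> 1" unfolding r_def using n0lt thpos N by (auto simp: field_simps)
    have rpow: "r ^ n0 > 0"
    proof (cases "n0 = 0")
      case False then show ?thesis unfolding r_def using thpos N by simp
    qed simp
    have mk: "measure_pmf.prob ?M {\<omega>. Sn \<omega> \<le> n0} * r ^ n0 \<le> exp (- ((1 - r) * \<theta> k * ?N))"
    proof -
      have "measure_pmf.prob ?M {\<omega>. Sn \<omega> \<le> n0} * r ^ n0
          = measure_pmf.expectation ?M (\<lambda>\<omega>. indicator {\<omega>. Sn \<omega> \<le> n0} \<omega> * r ^ n0)"
        by simp
      also have "\<dots> \<le> measure_pmf.expectation ?M (\<lambda>\<omega>. r ^ Sn \<omega>)"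
      proof (rule integral_mono)
        show "integrable (measure_pmf ?M) (\<lambda>\<omega>. indicator {\<omega>. Sn \<omega> \<le> n0} \<omega> * r ^ n0)"
          by (rule measure_pmf.integrable_const_bound[where B="r ^ n0"]) (auto simp: indicator_def r)
        show "integrable (measure_pmf ?M) (\<lambda>\<omega>. r ^ Sn \<omega>)"
          by (rule measure_pmf.integrable_const_bound[where B=1]) (auto simp: r power_le_one)
        fix \<omega>
        show "indicator {\<omega>. Sn \<omega> \<le> n0} \<omega> * r ^ n0 \<le> r ^ Sn \<omega>"
          using r by (auto simp: indicator_def intro: power_decreasing)
      qed
      also have "\<dots> \<le> exp (- ((1 - r) * \<theta> k * ?N))"
        unfolding Sn_def by (rule mgf_bound) (use r th in auto)
      finally show ?thesis .
    qed
    have eq: "exp (- ((1 - r) * \<theta> k * ?N)) = exp (- (?N * d_pois (real n0 / ?N) (\<theta> k))) * r ^ n0"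
    proof (cases "n0 = 0")
      case True
      then show ?thesis by (simp add: r_def d_pois_def algebra_simps)
    next
      case False
      then have rp: "r > 0" unfolding r_def using thpos N by simp
      have "real n0 / ?N / \<theta> k = r" unfolding r_def by (simp add: field_simps)
      then have "?N * d_pois (real n0 / ?N) (\<theta> k) = real n0 * ln r + ?N * \<theta> k - real n0"
        unfolding d_pois_def using N by (simp add: field_simps)
      moreover have "r ^ n0 = exp (real n0 * ln r)" using rp by (simp add: exp_of_nat_mult)
      moreover have "(1 - r) * \<theta> k * ?N = \<theta> k * ?N - real n0"
        unfolding r_def using thpos N by (simp add: field_simps)
      ultimately show ?thesis by (simp only:) (simp add: mult_exp_exp algebra_simps)
    qed
    have "measure_pmf.prob ?M E \<le> measure_pmf.prob ?M {\<omega>. Sn \<omega> \<le> n0}"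
      using sub by (intro measure_pmf.finite_measure_mono) auto
    also have "\<dots> \<le> exp (- (?N * d_pois (real n0 / ?N) (\<theta> k)))"
      using mk rpow unfolding eq by simp
    also have "\<dots> < exp (- \<delta>)" using dl by simp
    finally show ?thesis unfolding E_def .
  qed
qed

end
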